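(* Let $\mathcal W$ be a discrete memoryless channel from a finite set $\mathcal X$ to a finite set $\mathcal Y$ and $\alpha\in(0,1)\cup(1,\infty)$. Then $$U_\alpha(\mathcal W)=\min_{Q_Y\in\mathcal P(\mathcal Y)}\max_{x\in\mathcal X}D_\alpha\big(Q_Y\|\mathcal W(\cdot|x)\big).$$
   Context: For $\alpha\in(0,1)\cup(1,\infty)$, $D_\alpha(P\|Q)=\frac1{\alpha-1}\log\sum_{x:P(x)>0}P(x)^\alpha Q(x)^{1-\alpha}$ ($+\infty$ if $\alpha>1$ and $P\not\ll Q$). The Rényi $\alpha$-umlaut information of the channel is $U_\alpha(\mathcal W)=\max_{P_X\in\mathcal P(\mathcal X)}\min_{Q_Y\in\mathcal P(\mathcal Y)}D_\alpha(P_X\times Q_Y\|P_{XY})$ with $P_{XY}(x,y)=P_X(x)\mathcal W(y|x)$. *)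

theory Defs
  imports "HOL-Analysis.Analysis"
begin

definition is_pd :: "('a::finite \<Rightarrow> real) \<Rightarrow> bool" where
  "is_pd P \<longleftrightarrow> (\<forall>x. 0 \<le> P x) \<and> (\<Sum>x\<in>UNIV. P x) = 1"

text \<open>Discrete memoryless channel: a stochastic matrix W x y = W(y|x).\<close>
definition is_channel :: "('x::finite \<Rightarrow> 'y::finite \<Rightarrow> real) \<Rightarrow> bool" where
  "is_channel W \<longleftrightarrow> (\<forall>x. is_pd (W x))"

text \<open>Renyi divergence (natural logarithm), with value +infinity when P is not
  absolutely continuous w.r.t. Q for alpha > 1, and when the sum vanishes
  (log 0 = -infinity divided by alpha - 1 < 0) for alpha < 1.\<close>
definition renyi_div :: "real \<Rightarrow> ('a::finite \<Rightarrow> real) \<Rightarrow> ('a \<Rightarrow> real) \<Rightarrow> ereal" where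
  "renyi_div \<alpha> P Q =
     (let S = (\<Sum>x\<in>{x. P x > 0}. P x powr \<alpha> * Q x powr (1 - \<alpha>)) in
      if \<alpha> > 1 \<and> \<not> (\<forall>x. P x > 0 \<longrightarrow> Q x > 0) then \<infinity>
      else if S = 0 then \<infinity>
      else ereal (ln S / (\<alpha> - 1)))"

definition umlaut_info :: "real \<Rightarrow> ('x::finite \<Rightarrow> 'y::finite \<Rightarrow> real) \<Rightarrow> ereal" where
  "umlaut_info \<alpha> W =
     (SUP P\<in>{P. is_pd P}. INF Q\<in>{Q. is_pd Q}.
        renyi_div \<alpha> (\<lambda>(x, y). P x * Q y) (\<lambda>(x, y). P x * W x y))"

end

theory Submission
  imports Defs
begin


lemma powr_le_self_01: "(u::real) \<ge> 0 \<Longrightarrow> u \<le> 1 \<Longrightarrow> (a::real) \<ge> 1 \<Longrightarrow> u powr a \<le> u"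
  by (smt (verit) powr_le_one_le powr_nonneg_iff)
lemma powr_ge_self_01: "(u::real) \<ge> 0 \<Longrightarrow> u \<le> 1 \<Longrightarrow> (a::real) \<le> 1 \<Longrightarrow> a > 0 \<Longrightarrow> u powr a \<ge> u"
  by (metis powr_mono' powr_one)

lemma powr_cvx:
  fixes \<alpha> a b u :: real
  assumes "1 \<le> \<alpha>" "0 \<le> a" "0 \<le> b" "0 \<le> u" "u \<le> 1"
  shows "(u*a + (1-u)*b) powr \<alpha> \<le> u * a powr \<alpha> + (1-u) * b powr \<alpha>"
proof (cases "a = 0 \<or> b = 0")
  case True
  then show ?thesis
  proof
    assume "a = 0"
    have "((1-u)*b) powr \<alpha> = (1-u) powr \<alpha> * b powr \<alpha>"
      using assms by (simp add: powr_mult)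
    also have "\<dots> \<le> (1-u) * b powr \<alpha>"
      using assms powr_le_self_01[of "1-u" \<alpha>] by (intro mult_right_mono) auto
    finally show ?thesis using \<open>a = 0\<close> by simp
  next
    assume "b = 0"
    have "(u*a) powr \<alpha> = u powr \<alpha> * a powr \<alpha>"
      using assms by (simp add: powr_mult)
    also have "\<dots> \<le> u * a powr \<alpha>"
      using assms powr_le_self_01[of "u" \<alpha>] by (intro mult_right_mono) auto
    finally show ?thesis using \<open>b = 0\<close> by simp
  qed
next
  case False
  then have "a > 0" "b > 0" using assms by auto
  from convex_onD[OF powr_convex[OF assms(1)], of "1-u" a b] assms \<open>a>0\<close> \<open>b>0\<close>
  show ?thesis by (simp add: algebra_simps)
qed

lemma powr_ccv:
  fixes \<alpha> a b u :: real
  assumes "0 < \<alpha>" "\<alpha> \<le> 1" "0 \<le> a" "0 \<le> b" "0 \<le> u" "u \<le> 1"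
  shows "(u*a + (1-u)*b) powr \<alpha> \<ge> u * a powr \<alpha> + (1-u) * b powr \<alpha>"
proof (cases "a = 0 \<or> b = 0")
  case True
  then show ?thesis
  proof
    assume "a = 0"
    have "((1-u)*b) powr \<alpha> = (1-u) powr \<alpha> * b powr \<alpha>"
      using assms by (simp add: powr_mult)
    also have "\<dots> \<ge> (1-u) * b powr \<alpha>"
      using assms powr_ge_self_01[of "1-u" \<alpha>] by (intro mult_right_mono) auto
    finally show ?thesis using \<open>a = 0\<close> by simp
  next
    assume "b = 0"
    have "(u*a) powr \<alpha> = u powr \<alpha> * a powr \<alpha>"
      using assms by (simp add: powr_mult)
    also have "\<dots> \<ge> u * a powr \<alpha>"
      using assms powr_ge_self_01[of "u" \<alpha>] by (intro mult_right_mono) auto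
    finally show ?thesis using \<open>b = 0\<close> by simp
  qed
next
  case False
  then have "a > 0" "b > 0" using assms by auto
  have cc: "concave_on {0<..} (\<lambda>x::real. x powr \<alpha>)"
  proof (rule f''_le0_imp_concave[where f'="\<lambda>x. \<alpha> * x powr (\<alpha> - 1)" and f''="\<lambda>x. \<alpha> * ((\<alpha> - 1) * x powr (\<alpha> - 1 - 1))"])
    show "convex {0::real<..}" by simp
  next
    fix x :: real assume "x \<in> {0<..}"
    then show "DERIV (\<lambda>x. x powr \<alpha>) x :> \<alpha> * x powr (\<alpha> - 1)"
      by (auto intro!: derivative_eq_intros)
  next
    fix x :: real assume "x \<in> {0<..}"
    then show "DERIV (\<lambda>x. \<alpha> * x powr (\<alpha> - 1)) x :> \<alpha> * ((\<alpha> - 1) * x powr (\<alpha> - 1 - 1))"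
      by (auto intro!: derivative_eq_intros)
  next
    fix x :: real assume "x \<in> {0<..}"
    then show "\<alpha> * ((\<alpha> - 1) * x powr (\<alpha> - 1 - 1)) \<le> 0"
      using assms by (intro mult_nonneg_nonpos mult_nonpos_nonneg) auto
  qed
  from convex_onD[OF cc[unfolded concave_on_def], of "1-u" a b] assms \<open>a>0\<close> \<open>b>0\<close>
  show ?thesis by (simp add: algebra_simps)
qed


lemma minimax_sep:
  fixes k :: "'x::finite \<Rightarrow> ('y \<Rightarrow> real) \<Rightarrow> real" and D :: "('y \<Rightarrow> real) set" and v :: real
  assumes Dne: "Qz \<in> D"
    and Dcvx: "\<And>Q1 Q2 u. Q1\<in>D \<Longrightarrow> Q2\<in>D \<Longrightarrow> 0\<le>u \<Longrightarrow> u\<le>1 \<Longrightarrow> (\<lambda>y. u*Q1 y + (1-u)*Q2 y) \<in> D"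
    and kcvx: "\<And>x Q1 Q2 u. Q1\<in>D \<Longrightarrow> Q2\<in>D \<Longrightarrow> 0\<le>u \<Longrightarrow> u\<le>1 \<Longrightarrow>
       k x (\<lambda>y. u*Q1 y + (1-u)*Q2 y) \<le> u * k x Q1 + (1-u) * k x Q2"
    and lb: "\<And>Q. Q\<in>D \<Longrightarrow> \<exists>x. v \<le> k x Q"
  shows "\<exists>P. is_pd P \<and> (\<forall>Q\<in>D. v \<le> (\<Sum>x\<in>UNIV. P x * k x Q))"
proof -
  define S :: "(real^'x) set" where "S = {z. \<exists>Q\<in>D. \<exists>t>0. \<forall>x. k x Q - v + t \<le> z$x}"
  have cS: "convex S"
  proof (rule convexI)
    fix z1 z2 :: "real^'x" and u w :: real
    assume z1: "z1 \<in> S" and z2: "z2 \<in> S" and uw0: "0 \<le> u" "0 \<le> w" "u + w = 1"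
    then have uw: "0 \<le> u \<and> 0 \<le> w \<and> u + w = 1" by simp
    obtain Q1 t1 where Q1: "Q1 \<in> D" "t1 > 0" "\<forall>x. k x Q1 - v + t1 \<le> z1$x" using z1 unfolding S_def by blast
    obtain Q2 t2 where Q2: "Q2 \<in> D" "t2 > 0" "\<forall>x. k x Q2 - v + t2 \<le> z2$x" using z2 unfolding S_def by blast
    have wu: "w = 1 - u" using uw by simp
    define Q where "Q = (\<lambda>y. u*Q1 y + (1-u)*Q2 y)"
    have QD: "Q \<in> D" unfolding Q_def using Dcvx[OF Q1(1) Q2(1)] uw by auto
    have tpos: "u*t1 + w*t2 > 0"
    proof (cases "u = 0")
      case True then show ?thesis using uw Q2 by simp
    next
      case False then have "u > 0" using uw by simp
      then show ?thesis using uw Q1 Q2 by (simp add: add_pos_nonneg)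
    qed
    have "\<forall>x. k x Q - v + (u*t1 + w*t2) \<le> (u *\<^sub>R z1 + w *\<^sub>R z2)$x"
    proof
      fix x
      have "k x Q \<le> u * k x Q1 + (1-u) * k x Q2" unfolding Q_def using kcvx[OF Q1(1) Q2(1)] uw by auto
      moreover have "u * (k x Q1 - v + t1) \<le> u * z1$x" using Q1(3) uw by (simp add: mult_left_mono)
      moreover have "w * (k x Q2 - v + t2) \<le> w * z2$x" using Q2(3) uw by (simp add: mult_left_mono)
      ultimately show "k x Q - v + (u*t1 + w*t2) \<le> (u *\<^sub>R z1 + w *\<^sub>R z2)$x"
        unfolding wu by (simp add: algebra_simps)
    qed
    then show "u *\<^sub>R z1 + w *\<^sub>R z2 \<in> S" unfolding S_def using QD tpos by blast
  qed
  have n0: "0 \<notin> S"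
  proof
    assume "0 \<in> S"
    then obtain Q t where "Q \<in> D" "t > 0" "\<forall>x. k x Q - v + t \<le> 0" unfolding S_def by auto
    moreover obtain x where "v \<le> k x Q" using lb \<open>Q \<in> D\<close> by blast
    ultimately show False by (smt (verit))
  qed
  obtain a :: "real^'x" where a0: "a \<noteq> 0" and aS: "\<forall>z\<in>S. 0 \<le> inner a z"
    using separating_hyperplane_set_0[OF cS n0] by blast
  have inn: "inner a z = (\<Sum>x\<in>UNIV. a$x * z$x)" for z :: "real^'x"
    by (simp add: inner_vec_def mult.commute)
  have anonneg: "a$i \<ge> 0" for i
  proof (rule ccontr)
    assume neg: "\<not> a$i \<ge> 0"
    define C where "C = (\<Sum>x\<in>UNIV. a$x * (k x Qz - v + 1))"
    define s where "s = (\<bar>C\<bar> + 1) / (- a$i)"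
    have s0: "s \<ge> 0" using neg unfolding s_def by (intro divide_nonneg_pos) auto
    define z :: "real^'x" where "z = (\<chi> x. k x Qz - v + 1 + (if x = i then s else 0))"
    have "z \<in> S" unfolding S_def z_def using Dne s0
      by (intro CollectI bexI[of _ Qz] exI[of _ 1]) auto
    then have "0 \<le> inner a z" using aS by blast
    also have "inner a z = C + a$i * s"
    proof -
      have "inner a z = (\<Sum>x\<in>UNIV. a $ x * (k x Qz - v + 1) + (if x = i then a $ x * s else 0))"
        unfolding inn z_def by (auto intro!: sum.cong simp: algebra_simps)
      also have "\<dots> = C + a$i * s" unfolding C_def sum.distrib by simp
      finally show ?thesis .
    qed
    also have "a$i * s = - (\<bar>C\<bar> + 1)" using neg unfolding s_def by simp
    finally show False by linarith
  qed
  have sumpos: "(\<Sum>x\<in>UNIV. a$x) > 0"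
  proof -
    obtain i where "a$i \<noteq> 0" using a0 by (metis vec_eq_iff zero_index)
    then have "a$i > 0" using anonneg[of i] by simp
    have "a$i \<le> (\<Sum>x\<in>UNIV. a$x)"
      by (rule member_le_sum) (use anonneg in auto)
    then show ?thesis using \<open>a$i > 0\<close> by simp
  qed
  define P where "P x = a$x / (\<Sum>x\<in>UNIV. a$x)" for x
  have pd: "is_pd P"
    unfolding is_pd_def P_def using anonneg sumpos
    by (auto simp: sum_divide_distrib[symmetric])
  have "v \<le> (\<Sum>x\<in>UNIV. P x * k x Q)" if QD: "Q \<in> D" for Q
  proof (rule ccontr)
    assume "\<not> v \<le> (\<Sum>x\<in>UNIV. P x * k x Q)"
    then have lt: "(\<Sum>x\<in>UNIV. P x * k x Q) < v" by simp
    define t where "t = (v - (\<Sum>x\<in>UNIV. P x * k x Q)) / 2"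
    have t0: "t > 0" using lt unfolding t_def by simp
    define z :: "real^'x" where "z = (\<chi> x. k x Q - v + t)"
    have "z \<in> S" unfolding S_def z_def using QD t0 by auto
    then have "0 \<le> inner a z" using aS by blast
    also have "inner a z = (\<Sum>x\<in>UNIV. a$x * k x Q) - (v - t) * (\<Sum>x\<in>UNIV. a$x)"
      unfolding inn z_def by (simp add: algebra_simps sum.distrib sum_distrib_left sum_subtractf)
    also have "(\<Sum>x\<in>UNIV. a$x * k x Q) = (\<Sum>x\<in>UNIV. a$x) * (\<Sum>x\<in>UNIV. P x * k x Q)"
      unfolding P_def using sumpos by (simp add: sum_distrib_left)
    finally have "0 \<le> (\<Sum>x\<in>UNIV. a$x) * ((\<Sum>x\<in>UNIV. P x * k x Q) - (v - t))"
      by (simp add: algebra_simps)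
    then have "0 \<le> (\<Sum>x\<in>UNIV. P x * k x Q) - (v - t)"
      using sumpos by (simp add: zero_le_mult_iff)
    then show False using t0 unfolding t_def by (smt (verit) field_sum_of_halves)
  qed
  then show ?thesis using pd by blast
qed


definition GG :: "real \<Rightarrow> ('x::finite \<Rightarrow> 'y::finite \<Rightarrow> real) \<Rightarrow> 'x \<Rightarrow> ('y \<Rightarrow> real) \<Rightarrow> real" where
  "GG \<alpha> W x Q = (\<Sum>y\<in>UNIV. Q y powr \<alpha> * W x y powr (1 - \<alpha>))"

lemma rd_single:
  fixes W :: "'x::finite \<Rightarrow> 'y::finite \<Rightarrow> real"
  assumes "is_pd Q"
  shows "renyi_div \<alpha> Q (W x) = (if \<alpha> > 1 \<and> \<not> (\<forall>y. Q y > 0 \<longrightarrow> W x y > 0) then \<infinity>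
      else if GG \<alpha> W x Q = 0 then \<infinity> else ereal (ln (GG \<alpha> W x Q) / (\<alpha> - 1)))"
proof -
  have "(\<Sum>y\<in>{y. Q y > 0}. Q y powr \<alpha> * W x y powr (1 - \<alpha>)) = GG \<alpha> W x Q"
    unfolding GG_def
  proof (rule sum.mono_neutral_left)
    show "\<forall>i\<in>UNIV - {y. 0 < Q y}. Q i powr \<alpha> * W x i powr (1 - \<alpha>) = 0"
      using assms unfolding is_pd_def by (auto simp: not_less order.antisym)
  qed auto
  then show ?thesis unfolding renyi_div_def Let_def by simp
qed

lemma rd_joint:
  fixes W :: "'x::finite \<Rightarrow> 'y::finite \<Rightarrow> real"
  assumes P: "is_pd P" and Q: "is_pd Q" and W: "\<And>x y. W x y \<ge> 0"
  shows "renyi_div \<alpha> (\<lambda>(x, y). P x * Q y) (\<lambda>(x, y). P x * W x y) =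
     (if \<alpha> > 1 \<and> \<not> (\<forall>x. P x > 0 \<longrightarrow> (\<forall>y. Q y > 0 \<longrightarrow> W x y > 0)) then \<infinity>
      else if (\<Sum>x\<in>UNIV. P x * GG \<alpha> W x Q) = 0 then \<infinity>
      else ereal (ln (\<Sum>x\<in>UNIV. P x * GG \<alpha> W x Q) / (\<alpha> - 1)))"
proof -
  have P0: "P x \<ge> 0" for x using P unfolding is_pd_def by auto
  have Q0: "Q y \<ge> 0" for y using Q unfolding is_pd_def by auto
  have pos: "(P x * Q y > 0) \<longleftrightarrow> (P x > 0 \<and> Q y > 0)" for x y
    using P0[of x] Q0[of y] by (auto simp: zero_less_mult_iff)
  have ac: "(\<forall>p. (case p of (x, y) \<Rightarrow> P x * Q y) > 0 \<longrightarrow> (case p of (x, y) \<Rightarrow> P x * W x y) > 0)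
     \<longleftrightarrow> (\<forall>x. P x > 0 \<longrightarrow> (\<forall>y. Q y > 0 \<longrightarrow> W x y > 0))"
    using pos P0 by (auto simp: zero_less_mult_iff)
  have trm: "(case p of (x, y) \<Rightarrow> P x * Q y) powr \<alpha> * (case p of (x, y) \<Rightarrow> P x * W x y) powr (1 - \<alpha>)
       = (case p of (x, y) \<Rightarrow> P x * (Q y powr \<alpha> * W x y powr (1 - \<alpha>)))" for p
  proof (cases p)
    case (Pair x y)
    show ?thesis
    proof (cases "P x = 0")
      case True then show ?thesis using Pair by simp
    next
      case False
      then have "P x > 0" using P0[of x] by simp
      have "(P x * Q y) powr \<alpha> * (P x * W x y) powr (1 - \<alpha>)
          = (P x powr \<alpha> * P x powr (1 - \<alpha>)) * (Q y powr \<alpha> * W x y powr (1 - \<alpha>))"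
        using P0[of x] Q0[of y] W[of x y] by (simp add: powr_mult)
      also have "P x powr \<alpha> * P x powr (1 - \<alpha>) = P x"
        using \<open>P x > 0\<close> by (simp add: powr_add[symmetric])
      finally show ?thesis using Pair by simp
    qed
  qed
  have "(\<Sum>p\<in>{p. (case p of (x, y) \<Rightarrow> P x * Q y) > 0}.
          (case p of (x, y) \<Rightarrow> P x * Q y) powr \<alpha> * (case p of (x, y) \<Rightarrow> P x * W x y) powr (1 - \<alpha>))
      = (\<Sum>p\<in>UNIV. (case p of (x, y) \<Rightarrow> P x * (Q y powr \<alpha> * W x y powr (1 - \<alpha>))))"
    unfolding trm
  proof (rule sum.mono_neutral_left)
    show "\<forall>i\<in>UNIV - {p. (case p of (x, y) \<Rightarrow> P x * Q y) > 0}.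
            (case i of (x, y) \<Rightarrow> P x * (Q y powr \<alpha> * W x y powr (1 - \<alpha>))) = 0"
      using pos P0 Q0 by (auto simp: not_less order.antisym) (metis less_eq_real_def)+
  qed auto
  also have "\<dots> = (\<Sum>x\<in>UNIV. P x * GG \<alpha> W x Q)"
    unfolding GG_def sum_distrib_left
    by (simp add: sum.cartesian_product UNIV_Times_UNIV[symmetric] del: UNIV_Times_UNIV)
  finally have S: "(\<Sum>p\<in>{p. (case p of (x, y) \<Rightarrow> P x * Q y) > 0}.
          (case p of (x, y) \<Rightarrow> P x * Q y) powr \<alpha> * (case p of (x, y) \<Rightarrow> P x * W x y) powr (1 - \<alpha>))
      = (\<Sum>x\<in>UNIV. P x * GG \<alpha> W x Q)" .
  show ?thesis unfolding renyi_div_def Let_def S ac by simp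
qed


lemma cont_Min:
  fixes f :: "'a \<Rightarrow> 'b::topological_space \<Rightarrow> real"
  assumes "finite A" "A \<noteq> {}" "\<And>x. x\<in>A \<Longrightarrow> continuous_on S (f x)"
  shows "continuous_on S (\<lambda>q. Min ((\<lambda>x. f x q) ` A))"
  using assms
proof (induction A rule: finite_ne_induct)
  case (singleton x) then show ?case by simp
next
  case (insert x F)
  have "continuous_on S (\<lambda>q. min (f x q) (Min ((\<lambda>x. f x q) ` F)))"
    using insert by (intro continuous_on_min) auto
  then show ?case using insert by (simp add: Min_insert)
qed

lemma cont_Max:
  fixes f :: "'a \<Rightarrow> 'b::topological_space \<Rightarrow> real"
  assumes "finite A" "A \<noteq> {}" "\<And>x. x\<in>A \<Longrightarrow> continuous_on S (f x)"
  shows "continuous_on S (\<lambda>q. Max ((\<lambda>x. f x q) ` A))"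
  using assms
proof (induction A rule: finite_ne_induct)
  case (singleton x) then show ?case by simp
next
  case (insert x F)
  have "continuous_on S (\<lambda>q. max (f x q) (Max ((\<lambda>x. f x q) ` F)))"
    using insert by (intro continuous_on_max) auto
  then show ?case using insert by (simp add: Max_insert)
qed

definition Sv :: "(real^'y::finite) set" where
  "Sv = {q. (\<forall>y. 0 \<le> q$y) \<and> (\<Sum>y\<in>UNIV. q$y) = 1}"

lemma closed_Sv: "closed Sv"
  unfolding Sv_def
  by (intro closed_Collect_conj closed_Collect_all closed_Collect_le closed_Collect_eq
      continuous_intros continuous_on_component continuous_on_id)

lemma Sv_le1: assumes "q \<in> Sv" shows "q$y \<le> 1"
proof -
  have "q$y \<le> (\<Sum>y\<in>UNIV. q$y)" using assms unfolding Sv_def by (intro member_le_sum) auto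
  then show ?thesis using assms unfolding Sv_def by simp
qed

lemma compact_Sv: "compact Sv"
proof -
  have "Sv = cbox 0 (\<chi> y. 1) \<inter> Sv" using Sv_le1 by (auto simp: mem_box_cart) (auto simp: Sv_def)
  then show ?thesis using compact_Int_closed[OF compact_cbox closed_Sv] by metis
qed

lemma cont_GV:
  assumes "0 < \<alpha>"
  shows "continuous_on Sv (\<lambda>q::real^'y::finite. (\<Sum>y\<in>UNIV. (q$y) powr \<alpha> * c y))"
  using assms
  by (intro continuous_intros continuous_on_powr' continuous_on_component continuous_on_id)
     (auto simp: Sv_def)



lemma pd_vec: "is_pd Q \<Longrightarrow> vec_lambda Q \<in> Sv"
  by (simp add: Sv_def is_pd_def)

lemma vec_pd: "q \<in> Sv \<Longrightarrow> is_pd (vec_nth q)"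
  by (simp add: Sv_def is_pd_def)

lemma uniform_pd: "is_pd (\<lambda>_::'a::finite. 1 / real CARD('a))"
  by (simp add: is_pd_def)

lemma mix_pd:
  assumes "is_pd P" "is_pd Q" "0 \<le> u" "u \<le> 1"
  shows "is_pd (\<lambda>y. u * P y + (1-u) * Q y)"
  using assms unfolding is_pd_def
  by (auto simp: sum.distrib sum_distrib_left[symmetric])

lemma GG_nonneg: "0 \<le> GG \<alpha> W x Q"
  unfolding GG_def by (intro sum_nonneg) simp

lemma GG_cvx:
  assumes "1 \<le> \<alpha>" "\<And>y. 0 \<le> Q1 y" "\<And>y. 0 \<le> Q2 y" "0 \<le> u" "u \<le> 1"
  shows "GG \<alpha> W x (\<lambda>y. u * Q1 y + (1-u) * Q2 y) \<le> u * GG \<alpha> W x Q1 + (1-u) * GG \<alpha> W x Q2"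
proof -
  have "(u * Q1 y + (1-u) * Q2 y) powr \<alpha> * W x y powr (1-\<alpha>)
     \<le> (u * Q1 y powr \<alpha> + (1-u) * Q2 y powr \<alpha>) * W x y powr (1-\<alpha>)" for y
    using powr_cvx[OF assms(1) assms(2)[of y] assms(3)[of y] assms(4) assms(5)]
    by (intro mult_right_mono) auto
  then show ?thesis
    unfolding GG_def sum_distrib_left sum.distrib[symmetric]
    by (intro sum_mono) (simp add: algebra_simps)
qed

lemma GG_ccv:
  assumes "0 < \<alpha>" "\<alpha> \<le> 1" "\<And>y. 0 \<le> Q1 y" "\<And>y. 0 \<le> Q2 y" "0 \<le> u" "u \<le> 1"
  shows "GG \<alpha> W x (\<lambda>y. u * Q1 y + (1-u) * Q2 y) \<ge> u * GG \<alpha> W x Q1 + (1-u) * GG \<alpha> W x Q2"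
proof -
  have "(u * Q1 y + (1-u) * Q2 y) powr \<alpha> * W x y powr (1-\<alpha>)
     \<ge> (u * Q1 y powr \<alpha> + (1-u) * Q2 y powr \<alpha>) * W x y powr (1-\<alpha>)" for y
    using powr_ccv[OF assms(1) assms(2) assms(3)[of y] assms(4)[of y] assms(5) assms(6)]
    by (intro mult_right_mono) auto
  then show ?thesis
    unfolding GG_def sum_distrib_left sum.distrib[symmetric]
    by (intro sum_mono) (simp add: algebra_simps)
qed

lemma case_lt1:
  fixes W :: "'x::finite \<Rightarrow> 'y::finite \<Rightarrow> real" and \<alpha> :: real
  assumes Wc: "is_channel W" and a0: "0 < \<alpha>" and a1: "\<alpha> < 1"
  shows "\<exists>Q. is_pd Q
          \<and> (MAX x\<in>UNIV. renyi_div \<alpha> Q (W x)) = umlaut_info \<alpha> W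
          \<and> (\<forall>Q'. is_pd Q' \<longrightarrow> (MAX x\<in>UNIV. renyi_div \<alpha> Q (W x)) \<le> (MAX x\<in>UNIV. renyi_div \<alpha> Q' (W x)))"
proof -
  have W0: "\<And>x y. 0 \<le> W x y" using Wc unfolding is_channel_def is_pd_def by auto
  define psi where "psi s = (if s = 0 then \<infinity> else ereal (ln s / (\<alpha> - 1)))" for s :: real
  have psi_anti: "psi t \<le> psi s" if "0 \<le> s" "s \<le> t" for s t
  proof (cases "s = 0")
    case True then show ?thesis unfolding psi_def by simp
  next
    case False
    then have "0 < s" "0 < t" using that by auto
    then have "ln s \<le> ln t" using that by simp
    then have "ln t / (\<alpha> - 1) \<le> ln s / (\<alpha> - 1)" using a1 by (intro divide_right_mono_neg) auto
    then show ?thesis unfolding psi_def using \<open>0 < s\<close> \<open>0 < t\<close> by simp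
  qed
  have rds: "renyi_div \<alpha> Q (W x) = psi (GG \<alpha> W x Q)" if "is_pd Q" for Q x
    using rd_single[OF that, of \<alpha> W x] a1 unfolding psi_def by simp
  have rdj: "renyi_div \<alpha> (\<lambda>(x, y). P x * Q y) (\<lambda>(x, y). P x * W x y) = psi (\<Sum>x\<in>UNIV. P x * GG \<alpha> W x Q)"
    if "is_pd P" "is_pd Q" for P Q
    using rd_joint[OF that W0, of \<alpha>] a1 unfolding psi_def by simp
  define mm where "mm Q = Min (range (\<lambda>x. GG \<alpha> W x Q))" for Q
  have cont: "continuous_on Sv (\<lambda>q::real^'y. mm (vec_nth q))"
    unfolding mm_def GG_def
    by (intro cont_Min cont_GV a0) auto
  obtain qs where qs: "qs \<in> Sv" "\<forall>q\<in>Sv. mm (vec_nth q) \<le> mm (vec_nth qs)"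
    using continuous_attains_sup[OF compact_Sv _ cont] pd_vec[OF uniform_pd] by blast
  define Qs where "Qs = vec_nth qs"
  have Qs_pd: "is_pd Qs" unfolding Qs_def using vec_pd[OF qs(1)] .
  define w where "w = mm Qs"
  have opt: "mm Q \<le> w" if "is_pd Q" for Q
  proof -
    have "vec_nth (vec_lambda Q) = Q" by (simp add: fun_eq_iff)
    moreover have "mm (vec_nth (vec_lambda Q)) \<le> mm (vec_nth qs)" using qs(2) pd_vec[OF that] by blast
    ultimately show ?thesis unfolding w_def Qs_def by simp
  qed
  have mm_le: "mm Q \<le> GG \<alpha> W x Q" for Q x unfolding mm_def by simp
  have mm_in: "\<exists>x. GG \<alpha> W x Q = mm Q" for Q
  proof -
    have "Min (range (\<lambda>x. GG \<alpha> W x Q)) \<in> range (\<lambda>x. GG \<alpha> W x Q)" by (rule Min_in) auto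
    then show ?thesis unfolding mm_def by (metis imageE)
  qed
  have w0: "0 \<le> w" unfolding w_def mm_def by (simp add: GG_nonneg)
  have MQs: "(MAX x\<in>UNIV. renyi_div \<alpha> Qs (W x)) = psi w"
  proof (rule antisym)
    show "(MAX x\<in>UNIV. renyi_div \<alpha> Qs (W x)) \<le> psi w"
    proof -
      have "renyi_div \<alpha> Qs (W x) \<le> psi w" for x
        using rds[OF Qs_pd, of x] psi_anti[OF w0 mm_le[of Qs x, folded w_def]] by simp
      then show ?thesis by (simp add: Max_le_iff)
    qed
  next
    obtain x where "GG \<alpha> W x Qs = w" using mm_in unfolding w_def by blast
    then have "psi w = renyi_div \<alpha> Qs (W x)" using rds[OF Qs_pd] by simp
    then show "psi w \<le> (MAX x\<in>UNIV. renyi_div \<alpha> Qs (W x))" by (simp add: Max_ge_iff)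
  qed
  have optimal: "psi w \<le> (MAX x\<in>UNIV. renyi_div \<alpha> Q' (W x))" if "is_pd Q'" for Q'
  proof -
    obtain x where x: "GG \<alpha> W x Q' = mm Q'" using mm_in by blast
    have "psi w \<le> psi (GG \<alpha> W x Q')" using psi_anti[OF GG_nonneg, of \<alpha> W x Q' w] x opt[OF that] by simp
    also have "\<dots> = renyi_div \<alpha> Q' (W x)" using rds[OF that] by simp
    also have "\<dots> \<le> (MAX x\<in>UNIV. renyi_div \<alpha> Q' (W x))" by (simp add: Max_ge_iff)
    finally show ?thesis .
  qed
  have up: "umlaut_info \<alpha> W \<le> psi w"
    unfolding umlaut_info_def
  proof (rule SUP_least)
    fix P :: "'x \<Rightarrow> real" assume P: "P \<in> {P. is_pd P}"
    have P0: "\<And>x. 0 \<le> P x" and P1: "(\<Sum>x\<in>UNIV. P x) = 1" using P unfolding is_pd_def by auto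
    have "(INF Q\<in>{Q. is_pd Q}. renyi_div \<alpha> (\<lambda>(x, y). P x * Q y) (\<lambda>(x, y). P x * W x y))
        \<le> renyi_div \<alpha> (\<lambda>(x, y). P x * Qs y) (\<lambda>(x, y). P x * W x y)"
      using Qs_pd by (intro INF_lower) auto
    also have "\<dots> = psi (\<Sum>x\<in>UNIV. P x * GG \<alpha> W x Qs)" using rdj P Qs_pd by simp
    also have "\<dots> \<le> psi w"
    proof (rule psi_anti[OF w0])
      have "(\<Sum>x\<in>UNIV. P x * w) \<le> (\<Sum>x\<in>UNIV. P x * GG \<alpha> W x Qs)"
        using P0 mm_le unfolding w_def by (intro sum_mono mult_left_mono) auto
      then show "w \<le> (\<Sum>x\<in>UNIV. P x * GG \<alpha> W x Qs)"
        using P1 by (simp add: sum_distrib_right[symmetric])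
    qed
    finally show "(INF Q\<in>{Q. is_pd Q}. renyi_div \<alpha> (\<lambda>(x, y). P x * Q y) (\<lambda>(x, y). P x * W x y)) \<le> psi w" .
  qed
  have "\<exists>P. is_pd P \<and> (\<forall>Q\<in>{Q. is_pd Q}. - w \<le> (\<Sum>x\<in>UNIV. P x * (- GG \<alpha> W x Q)))"
  proof (rule minimax_sep[where Qz=Qs])
    show "Qs \<in> {Q. is_pd Q}" using Qs_pd by simp
  next
    fix Q1 Q2 :: "'y \<Rightarrow> real" and u :: real
    assume "Q1 \<in> {Q. is_pd Q}" "Q2 \<in> {Q. is_pd Q}" "0 \<le> u" "u \<le> 1"
    then show "(\<lambda>y. u * Q1 y + (1 - u) * Q2 y) \<in> {Q. is_pd Q}" using mix_pd by auto
  next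
    fix x and Q1 Q2 :: "'y \<Rightarrow> real" and u :: real
    assume "Q1 \<in> {Q. is_pd Q}" "Q2 \<in> {Q. is_pd Q}" "0 \<le> u" "u \<le> 1"
    then show "- GG \<alpha> W x (\<lambda>y. u * Q1 y + (1 - u) * Q2 y) \<le> u * - GG \<alpha> W x Q1 + (1 - u) * - GG \<alpha> W x Q2"
      using GG_ccv[OF a0, of Q1 Q2 u W x] a1 unfolding is_pd_def by auto
  next
    fix Q :: "'y \<Rightarrow> real" assume "Q \<in> {Q. is_pd Q}"
    then have "mm Q \<le> w" using opt by auto
    moreover obtain x where "GG \<alpha> W x Q = mm Q" using mm_in by blast
    ultimately show "\<exists>x. - w \<le> - GG \<alpha> W x Q" by (metis neg_le_iff_le)
  qed
  then obtain P where P: "is_pd P" and Pb: "\<And>Q. is_pd Q \<Longrightarrow> (\<Sum>x\<in>UNIV. P x * GG \<alpha> W x Q) \<le> w"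
    by (auto simp: sum_negf)
  have P0: "\<And>x. 0 \<le> P x" using P unfolding is_pd_def by auto
  have low: "psi w \<le> umlaut_info \<alpha> W"
    unfolding umlaut_info_def
  proof (rule SUP_upper2[where i=P])
    show "P \<in> {P. is_pd P}" using P by simp
    show "psi w \<le> (INF Q\<in>{Q. is_pd Q}. renyi_div \<alpha> (\<lambda>(x, y). P x * Q y) (\<lambda>(x, y). P x * W x y))"
    proof (rule INF_greatest)
      fix Q :: "'y \<Rightarrow> real" assume Q: "Q \<in> {Q. is_pd Q}"
      have "psi w \<le> psi (\<Sum>x\<in>UNIV. P x * GG \<alpha> W x Q)"
        using Q Pb P0 GG_nonneg by (intro psi_anti sum_nonneg mult_nonneg_nonneg) auto
      also have "\<dots> = renyi_div \<alpha> (\<lambda>(x, y). P x * Q y) (\<lambda>(x, y). P x * W x y)"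
        using rdj P Q by simp
      finally show "psi w \<le> renyi_div \<alpha> (\<lambda>(x, y). P x * Q y) (\<lambda>(x, y). P x * W x y)" .
    qed
  qed
  show ?thesis
    using Qs_pd MQs up low optimal by (intro exI[of _ Qs]) auto
qed


lemma case_gt1:
  fixes W :: "'x::finite \<Rightarrow> 'y::finite \<Rightarrow> real" and \<alpha> :: real
  assumes Wc: "is_channel W" and a1: "1 < \<alpha>"
  shows "\<exists>Q. is_pd Q
          \<and> (MAX x\<in>UNIV. renyi_div \<alpha> Q (W x)) = umlaut_info \<alpha> W
          \<and> (\<forall>Q'. is_pd Q' \<longrightarrow> (MAX x\<in>UNIV. renyi_div \<alpha> Q (W x)) \<le> (MAX x\<in>UNIV. renyi_div \<alpha> Q' (W x)))"
proof -
  have a0: "0 < \<alpha>" using a1 by simp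
  have W0: "\<And>x y. 0 \<le> W x y" using Wc unfolding is_channel_def is_pd_def by auto
  define A where "A = {Q. is_pd Q \<and> (\<forall>y. Q y > 0 \<longrightarrow> (\<forall>x. W x y > 0))}"
  have notA_inf: "(MAX x\<in>UNIV. renyi_div \<alpha> Q (W x)) = \<infinity>" if Qpd: "is_pd Q" and QnA: "Q \<notin> A" for Q
  proof -
    obtain x y where "Q y > 0" "\<not> W x y > 0" using Qpd QnA unfolding A_def by auto
    then have "renyi_div \<alpha> Q (W x) = \<infinity>" using rd_single[OF Qpd, of \<alpha> W x] a1 by auto
    moreover have "renyi_div \<alpha> Q (W x) \<le> (MAX x\<in>UNIV. renyi_div \<alpha> Q (W x))" by (rule Max_ge) auto
    ultimately have "\<infinity> \<le> (MAX x\<in>UNIV. renyi_div \<alpha> Q (W x))" by simp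
    then show ?thesis by simp
  qed
  show ?thesis
  proof (cases "A = {}")
    case True
    define U where "U = (\<lambda>_::'y. 1 / real CARD('y))"
    have U: "is_pd U" unfolding U_def by (rule uniform_pd)
    define PU where "PU = (\<lambda>_::'x. 1 / real CARD('x))"
    have PU: "is_pd PU" unfolding PU_def by (rule uniform_pd)
    have "umlaut_info \<alpha> W \<ge> \<infinity>"
      unfolding umlaut_info_def
    proof (rule SUP_upper2[where i=PU])
      show "PU \<in> {P. is_pd P}" using PU by simp
      show "\<infinity> \<le> (INF Q\<in>{Q. is_pd Q}. renyi_div \<alpha> (\<lambda>(x, y). PU x * Q y) (\<lambda>(x, y). PU x * W x y))"
      proof (rule INF_greatest)
        fix Q :: "'y \<Rightarrow> real" assume Q: "Q \<in> {Q. is_pd Q}"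
        then have "Q \<notin> A" using True by auto
        then obtain x y where "Q y > 0" "\<not> W x y > 0" using Q unfolding A_def by auto
        moreover have "PU x > 0" unfolding PU_def by simp
        ultimately show "\<infinity> \<le> renyi_div \<alpha> (\<lambda>(x, y). PU x * Q y) (\<lambda>(x, y). PU x * W x y)"
          using rd_joint[OF PU _ W0, of Q \<alpha>] Q a1 by auto
      qed
    qed
    then have "umlaut_info \<alpha> W = \<infinity>" by simp
    then show ?thesis using U notA_inf True by (intro exI[of _ U]) auto
  next
    case False
    define Av :: "(real^'y) set" where
      "Av = Sv \<inter> {q. \<forall>y. q$y * (if \<exists>x. \<not> 0 < W x y then 1 else 0) = 0}"
    have Av_A: "vec_lambda Q \<in> Av" if "Q \<in> A" for Q
    proof -
      have pd: "is_pd Q" and sup: "\<And>y x. Q y > 0 \<Longrightarrow> W x y > 0" using that unfolding A_def by auto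
      have Q0: "\<And>y. 0 \<le> Q y" using pd unfolding is_pd_def by auto
      have "Q y * (if \<exists>x. \<not> 0 < W x y then 1 else 0) = 0" for y
      proof (cases "\<exists>x. \<not> 0 < W x y")
        case True
        then have "\<not> Q y > 0" using sup by blast
        then have "Q y = 0" using Q0[of y] by simp
        then show ?thesis by simp
      qed simp
      then show ?thesis using pd_vec[OF pd] unfolding Av_def by simp
    qed
    have A_Av: "vec_nth q \<in> A" if "q \<in> Av" for q
      using that vec_pd unfolding A_def Av_def by (auto split: if_splits)
    have cAv: "compact Av" unfolding Av_def
    proof (intro compact_Int_closed compact_Sv closed_Collect_all closed_Collect_eq)
      fix y
      show "continuous_on UNIV (\<lambda>q::real^'y. q$y * (if \<exists>x. \<not> 0 < W x y then 1 else 0))"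
        by (intro continuous_on_mult_right continuous_on_component continuous_on_id)
      show "continuous_on UNIV (\<lambda>q::real^'y. 0::real)" by (rule continuous_on_const)
    qed
    have neAv: "Av \<noteq> {}" using False Av_A by blast
    define Mx where "Mx Q = Max (range (\<lambda>x. GG \<alpha> W x Q))" for Q
    have cont: "continuous_on Av (\<lambda>q::real^'y. Mx (vec_nth q))"
      unfolding Mx_def GG_def
      by (rule continuous_on_subset[where s=Sv], intro cont_Max cont_GV a0) (auto simp: Av_def)
    obtain qs where qs: "qs \<in> Av" "\<forall>q\<in>Av. Mx (vec_nth qs) \<le> Mx (vec_nth q)"
      using continuous_attains_inf[OF cAv neAv cont] by blast
    define Qs where "Qs = vec_nth qs"
    have QsA: "Qs \<in> A" unfolding Qs_def using A_Av[OF qs(1)] .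
    then have Qs_pd: "is_pd Qs" unfolding A_def by simp
    define v where "v = Mx Qs"
    have opt: "v \<le> Mx Q" if "Q \<in> A" for Q
    proof -
      have "vec_nth (vec_lambda Q) = Q" by (simp add: fun_eq_iff)
      moreover have "Mx (vec_nth qs) \<le> Mx (vec_nth (vec_lambda Q))" using qs(2) Av_A[OF that] by blast
      ultimately show ?thesis unfolding v_def Qs_def by simp
    qed
    have Mx_ge: "GG \<alpha> W x Q \<le> Mx Q" for Q x unfolding Mx_def by simp
    have Mx_in: "\<exists>x. GG \<alpha> W x Q = Mx Q" for Q
    proof -
      have "Max (range (\<lambda>x. GG \<alpha> W x Q)) \<in> range (\<lambda>x. GG \<alpha> W x Q)" by (rule Max_in) auto
      then show ?thesis unfolding Mx_def by (metis imageE)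
    qed
    have Gpos: "GG \<alpha> W x Q > 0" if "Q \<in> A" for Q x
    proof -
      have Q0: "\<And>y. 0 \<le> Q y" and Q1: "(\<Sum>y\<in>UNIV. Q y) = 1" using that unfolding A_def is_pd_def by auto
      obtain y where "Q y \<noteq> 0" using Q1 by (metis sum.neutral zero_neq_one)
      then have "Q y > 0" using Q0[of y] by simp
      then have "W x y > 0" using that unfolding A_def by auto
      have "0 < Q y powr \<alpha> * W x y powr (1 - \<alpha>)" using \<open>Q y > 0\<close> \<open>W x y > 0\<close> by simp
      also have "\<dots> \<le> GG \<alpha> W x Q" unfolding GG_def by (intro member_le_sum) auto
      finally show ?thesis .
    qed
    have rds: "renyi_div \<alpha> Q (W x) = ereal (ln (GG \<alpha> W x Q) / (\<alpha> - 1))" if "Q \<in> A" for Q x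
      using rd_single[of Q \<alpha> W x] that Gpos[OF that, of x] unfolding A_def by auto
    have v0: "0 < v" unfolding v_def using less_le_trans[OF Gpos[OF QsA, of undefined] Mx_ge] .
    have lnmono: "ereal (ln s / (\<alpha> - 1)) \<le> ereal (ln t / (\<alpha> - 1))" if "0 < s" "s \<le> t" for s t
      using that a1 by (simp add: divide_right_mono)
    define c where "c = ln v / (\<alpha> - 1)"
    have MQs: "(MAX x\<in>UNIV. renyi_div \<alpha> Qs (W x)) = ereal c"
    proof (rule antisym)
      show "(MAX x\<in>UNIV. renyi_div \<alpha> Qs (W x)) \<le> ereal c"
        using rds[OF QsA] lnmono Gpos[OF QsA] Mx_ge unfolding c_def v_def by (simp add: Max_le_iff)
    next
      obtain x where "GG \<alpha> W x Qs = v" using Mx_in unfolding v_def by blast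
      then have "ereal c = renyi_div \<alpha> Qs (W x)" using rds[OF QsA] unfolding c_def by simp
      then show "ereal c \<le> (MAX x\<in>UNIV. renyi_div \<alpha> Qs (W x))" by (simp add: Max_ge_iff)
    qed
    have optimal: "ereal c \<le> (MAX x\<in>UNIV. renyi_div \<alpha> Q' (W x))" if "is_pd Q'" for Q'
    proof (cases "Q' \<in> A")
      case False then show ?thesis using notA_inf[OF that] by simp
    next
      case True
      obtain x where x: "GG \<alpha> W x Q' = Mx Q'" using Mx_in by blast
      have "ereal c \<le> ereal (ln (GG \<alpha> W x Q') / (\<alpha> - 1))"
        unfolding c_def using x opt[OF True] v0 by (intro lnmono) auto
      also have "\<dots> = renyi_div \<alpha> Q' (W x)" using rds[OF True] by simp
      also have "\<dots> \<le> (MAX x\<in>UNIV. renyi_div \<alpha> Q' (W x))" by (simp add: Max_ge_iff)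
      finally show ?thesis .
    qed
    have sumpos: "0 < (\<Sum>x\<in>UNIV. P x * GG \<alpha> W x Q)" if "is_pd P" "Q \<in> A" for P Q
    proof -
      have P0: "\<And>x. 0 \<le> P x" and P1: "(\<Sum>x\<in>UNIV. P x) = 1" using that unfolding is_pd_def by auto
      obtain x where "P x \<noteq> 0" using P1 by (metis sum.neutral zero_neq_one)
      then have "P x > 0" using P0[of x] by simp
      then have "0 < P x * GG \<alpha> W x Q" using Gpos[OF that(2)] by simp
      also have "\<dots> \<le> (\<Sum>x\<in>UNIV. P x * GG \<alpha> W x Q)"
        using P0 GG_nonneg by (intro member_le_sum mult_nonneg_nonneg) auto
      finally show ?thesis .
    qed
    have rdjA: "renyi_div \<alpha> (\<lambda>(x, y). P x * Q y) (\<lambda>(x, y). P x * W x y)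
        = ereal (ln (\<Sum>x\<in>UNIV. P x * GG \<alpha> W x Q) / (\<alpha> - 1))" if "is_pd P" "Q \<in> A" for P Q
      using rd_joint[OF that(1) _ W0, of Q \<alpha>] that sumpos[OF that] unfolding A_def by auto
    have up: "umlaut_info \<alpha> W \<le> ereal c"
      unfolding umlaut_info_def
    proof (rule SUP_least)
      fix P :: "'x \<Rightarrow> real" assume P: "P \<in> {P. is_pd P}"
      have P0: "\<And>x. 0 \<le> P x" and P1: "(\<Sum>x\<in>UNIV. P x) = 1" using P unfolding is_pd_def by auto
      have "(INF Q\<in>{Q. is_pd Q}. renyi_div \<alpha> (\<lambda>(x, y). P x * Q y) (\<lambda>(x, y). P x * W x y))
          \<le> renyi_div \<alpha> (\<lambda>(x, y). P x * Qs y) (\<lambda>(x, y). P x * W x y)"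
        using Qs_pd by (intro INF_lower) auto
      also have "\<dots> = ereal (ln (\<Sum>x\<in>UNIV. P x * GG \<alpha> W x Qs) / (\<alpha> - 1))" using rdjA P QsA by simp
      also have "\<dots> \<le> ereal c" unfolding c_def
      proof (rule lnmono)
        show "0 < (\<Sum>x\<in>UNIV. P x * GG \<alpha> W x Qs)" using sumpos P QsA by simp
        have "(\<Sum>x\<in>UNIV. P x * GG \<alpha> W x Qs) \<le> (\<Sum>x\<in>UNIV. P x * v)"
          using P0 Mx_ge unfolding v_def by (intro sum_mono mult_left_mono) auto
        then show "(\<Sum>x\<in>UNIV. P x * GG \<alpha> W x Qs) \<le> v"
          using P1 by (simp add: sum_distrib_right[symmetric])
      qed
      finally show "(INF Q\<in>{Q. is_pd Q}. renyi_div \<alpha> (\<lambda>(x, y). P x * Q y) (\<lambda>(x, y). P x * W x y)) \<le> ereal c" .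
    qed
    have "\<exists>P. is_pd P \<and> (\<forall>Q\<in>A. v \<le> (\<Sum>x\<in>UNIV. P x * GG \<alpha> W x Q))"
    proof (rule minimax_sep[where Qz=Qs])
      show "Qs \<in> A" using QsA .
    next
      fix Q1 Q2 :: "'y \<Rightarrow> real" and u :: real
      assume h: "Q1 \<in> A" "Q2 \<in> A" "0 \<le> u" "u \<le> 1"
      have Q10: "\<And>y. 0 \<le> Q1 y" "\<And>y. 0 \<le> Q2 y" using h unfolding A_def is_pd_def by auto
      have "(\<forall>y. u * Q1 y + (1 - u) * Q2 y > 0 \<longrightarrow> (\<forall>x. W x y > 0))"
      proof (intro allI impI)
        fix y x assume "u * Q1 y + (1 - u) * Q2 y > 0"
        then have "Q1 y > 0 \<or> Q2 y > 0"
        proof (cases "Q1 y > 0")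
          case False
          then have "Q1 y = 0" using Q10(1)[of y] by simp
          then have "(1 - u) * Q2 y > 0" using \<open>u * Q1 y + (1 - u) * Q2 y > 0\<close> by simp
          then have "Q2 y > 0" using h(4) by (simp add: zero_less_mult_iff)
          then show ?thesis by simp
        qed simp
        then show "W x y > 0" using h unfolding A_def by auto
      qed
      then show "(\<lambda>y. u * Q1 y + (1 - u) * Q2 y) \<in> A" using mix_pd h unfolding A_def by auto
    next
      fix x and Q1 Q2 :: "'y \<Rightarrow> real" and u :: real
      assume "Q1 \<in> A" "Q2 \<in> A" "0 \<le> u" "u \<le> 1"
      then show "GG \<alpha> W x (\<lambda>y. u * Q1 y + (1 - u) * Q2 y) \<le> u * GG \<alpha> W x Q1 + (1 - u) * GG \<alpha> W x Q2"
        using GG_cvx[of \<alpha> Q1 Q2 u W x] a1 unfolding A_def is_pd_def by auto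
    next
      fix Q :: "'y \<Rightarrow> real" assume "Q \<in> A"
      then have "v \<le> Mx Q" using opt by auto
      moreover obtain x where "GG \<alpha> W x Q = Mx Q" using Mx_in by blast
      ultimately show "\<exists>x. v \<le> GG \<alpha> W x Q" by metis
    qed
    then obtain P0 where P0: "is_pd P0" and P0b: "\<And>Q. Q \<in> A \<Longrightarrow> v \<le> (\<Sum>x\<in>UNIV. P0 x * GG \<alpha> W x Q)"
      by auto
    have low: "ereal c \<le> umlaut_info \<alpha> W"
    proof (rule ereal_le_epsilon2)
      fix e :: real assume e: "0 < e"
      define u where "u = exp (- e * (\<alpha> - 1))"
      have u0: "0 < u" and u1: "u < 1" unfolding u_def using e a1 by auto
      define PU where "PU = (\<lambda>_::'x. 1 / real CARD('x))"
      have PU: "is_pd PU" unfolding PU_def by (rule uniform_pd)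
      define Pe where "Pe = (\<lambda>x. u * P0 x + (1 - u) * PU x)"
      have Pe: "is_pd Pe" unfolding Pe_def using mix_pd[OF P0 PU] u0 u1 by simp
      have P00: "\<And>x. 0 \<le> P0 x" using P0 unfolding is_pd_def by auto
      have Pepos: "Pe x > 0" for x
        unfolding Pe_def PU_def using u0 u1 P00[of x] by (intro add_nonneg_pos) auto
      have "ereal (c - e) \<le> (INF Q\<in>{Q. is_pd Q}. renyi_div \<alpha> (\<lambda>(x, y). Pe x * Q y) (\<lambda>(x, y). Pe x * W x y))"
      proof (rule INF_greatest)
        fix Q :: "'y \<Rightarrow> real" assume Q: "Q \<in> {Q. is_pd Q}"
        show "ereal (c - e) \<le> renyi_div \<alpha> (\<lambda>(x, y). Pe x * Q y) (\<lambda>(x, y). Pe x * W x y)"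
        proof (cases "Q \<in> A")
          case False
          then obtain x y where "Q y > 0" "\<not> W x y > 0" using Q unfolding A_def by auto
          then have "renyi_div \<alpha> (\<lambda>(x, y). Pe x * Q y) (\<lambda>(x, y). Pe x * W x y) = \<infinity>"
            using rd_joint[OF Pe _ W0, of Q \<alpha>] Q a1 Pepos[of x] by auto
          then show ?thesis by simp
        next
          case True
          have "(\<Sum>x\<in>UNIV. Pe x * GG \<alpha> W x Q)
              = u * (\<Sum>x\<in>UNIV. P0 x * GG \<alpha> W x Q) + (1 - u) * (\<Sum>x\<in>UNIV. PU x * GG \<alpha> W x Q)"
            unfolding Pe_def by (simp add: sum_distrib_left sum.distrib[symmetric] algebra_simps)
          also have "\<dots> \<ge> u * v"
          proof -
            have "u * v \<le> u * (\<Sum>x\<in>UNIV. P0 x * GG \<alpha> W x Q)" using P0b[OF True] u0 by simp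
            moreover have "0 \<le> (1 - u) * (\<Sum>x\<in>UNIV. PU x * GG \<alpha> W x Q)"
              using u1 GG_nonneg unfolding PU_def by (intro mult_nonneg_nonneg sum_nonneg) auto
            ultimately show ?thesis by linarith
          qed
          finally have ge: "u * v \<le> (\<Sum>x\<in>UNIV. Pe x * GG \<alpha> W x Q)" .
          have "ereal (c - e) = ereal (ln (u * v) / (\<alpha> - 1))"
          proof -
            have "ln (u * v) = - e * (\<alpha> - 1) + ln v" using u0 v0 by (simp add: ln_mult u_def)
            then have "ln (u * v) / (\<alpha> - 1) = ln v / (\<alpha> - 1) - e" using a1 by (simp add: field_simps)
            then show ?thesis unfolding c_def by simp
          qed
          also have "\<dots> \<le> ereal (ln (\<Sum>x\<in>UNIV. Pe x * GG \<alpha> W x Q) / (\<alpha> - 1))"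
            using ge u0 v0 by (intro lnmono) auto
          also have "\<dots> = renyi_div \<alpha> (\<lambda>(x, y). Pe x * Q y) (\<lambda>(x, y). Pe x * W x y)"
            using rdjA[OF Pe True] by simp
          finally show ?thesis .
        qed
      qed
      also have "\<dots> \<le> umlaut_info \<alpha> W"
        unfolding umlaut_info_def using Pe by (intro SUP_upper) auto
      finally have "ereal (c - e) \<le> umlaut_info \<alpha> W" .
      then show "ereal c \<le> umlaut_info \<alpha> W + ereal e"
        by (cases "umlaut_info \<alpha> W") auto
    qed
    show ?thesis
      using Qs_pd MQs up low optimal by (intro exI[of _ Qs]) auto
  qed
qed


theorem mainTheorem12:
  fixes W :: "'x::finite \<Rightarrow> 'y::finite \<Rightarrow> real" and \<alpha> :: real
  assumes "is_channel W"
    and "0 < \<alpha>" and "\<alpha> \<noteq> 1"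
  shows "\<exists>Q. is_pd Q
          \<and> (MAX x\<in>UNIV. renyi_div \<alpha> Q (W x)) = umlaut_info \<alpha> W
          \<and> (\<forall>Q'. is_pd Q' \<longrightarrow> (MAX x\<in>UNIV. renyi_div \<alpha> Q (W x)) \<le> (MAX x\<in>UNIV. renyi_div \<alpha> Q' (W x)))"
proof (cases "\<alpha> < 1")
  case True
  then show ?thesis using case_lt1[OF assms(1,2) True] by blast
next
  case False
  then have "1 < \<alpha>" using assms(3) by simp
  then show ?thesis using case_gt1[OF assms(1)] by blast
qed

end
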